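(* Let $T\ge K\ge2$, $0<V\le T/K$, and suppose all $N=T/W$ windows have the same size $W$. Let $c=\frac18-\frac{\sqrt{\log(4/3)}}8$. Then for every policy $\pi$: if $W\le K^{1/3}(T/V)^{2/3}$, $R^\pi(T;W,V)\ge\frac c3(KV)^{1/3}T^{2/3}$; and if $W\ge K^{1/3}(T/V)^{2/3}$, $R^\pi(T;W,V)\ge c\,T\sqrt{K/W}$.
   Context: Bandit model: arms $[K]$, horizon $T$; in period $t$ arm $k$ has reward $Y_{t,k}\in[0,1]$ with mean $\mu_{t,k}\in[0,1]$, independent across periods; a (possibly randomized) policy picks $A_t$ using only past actions and observed rewards and observes $Y_{t,A_t}$. $\log$ is natural log. Windows are consecutive blocks $\mathcal W_j$ of $W$ periods partitioning $[T]$; $\mu^*_{\mathcal W_j}=\frac1W\max_k\sum_{t\in\mathcal W_j}\mu_{t,k}$. Regret $R^\pi(T;W,\{\mu\})=\sum_j W\mu^*_{\mathcal W_j}-\mathbb E[\sum_t\mu_{t,A_t}]$, and $R^\pi(T;W,V)$ is its supremum over all mean sequences in $[0,1]^{T\times K}$ with $\sum_{t=1}^{T-1}\max_k|\mu_{t,k}-\mu_{t+1,k}|\le V$ and all reward distributions on $[0,1]$ with those means. *)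

theory Defs
  imports "HOL-Probability.Probability"
begin

text \<open>Arms are 0..K-1, periods are 0..T-1 (0-indexed versions of [K], [T]).
  A history is the list of (action, observed reward) pairs of past periods.\<close>

type_synonym history = "(nat \<times> real) list"
type_synonym policy = "history \<Rightarrow> nat pmf"

definition valid_policy :: "nat \<Rightarrow> policy \<Rightarrow> bool" where
  "valid_policy K \<pi> \<longleftrightarrow> (\<forall>h. set_pmf (\<pi> h) \<subseteq> {..<K})"

text \<open>Reward distributions: D t k is the distribution of Y_{t,k} (support in [0,1]).\<close>

definition mean :: "real pmf \<Rightarrow> real" where
  "mean p = measure_pmf.expectation p (\<lambda>y. y)"

text \<open>Distribution of the history after t periods: rewards independent across periods.\<close>

primrec traj :: "policy \<Rightarrow> (nat \<Rightarrow> nat \<Rightarrow> real pmf) \<Rightarrow> nat \<Rightarrow> history pmf" where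
  "traj \<pi> D 0 = return_pmf []"
| "traj \<pi> D (Suc t) =
     bind_pmf (traj \<pi> D t) (\<lambda>h. bind_pmf (\<pi> h) (\<lambda>a.
       bind_pmf (D t a) (\<lambda>y. return_pmf (h @ [(a, y)]))))"

definition exp_collected :: "policy \<Rightarrow> (nat \<Rightarrow> nat \<Rightarrow> real pmf) \<Rightarrow> nat \<Rightarrow> real" where
  "exp_collected \<pi> D T =
     measure_pmf.expectation (traj \<pi> D T) (\<lambda>h. \<Sum>i<T. mean (D i (fst (h ! i))))"

text \<open>Windows W_j = {jW ..< (j+1)W}, j < T div W; W * mu^*_{W_j} = max_k sum_{t in W_j} mu_{t,k}.\<close>
definition window_regret ::
  "nat \<Rightarrow> nat \<Rightarrow> nat \<Rightarrow> policy \<Rightarrow> (nat \<Rightarrow> nat \<Rightarrow> real pmf) \<Rightarrow> real" where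
  "window_regret K T W \<pi> D =
     (\<Sum>j< T div W. Max ((\<lambda>k. \<Sum>t\<in>{j*W..<(j+1)*W}. mean (D t k)) ` {..<K}))
     - exp_collected \<pi> D T"

definition variation :: "nat \<Rightarrow> nat \<Rightarrow> (nat \<Rightarrow> nat \<Rightarrow> real pmf) \<Rightarrow> real" where
  "variation K T D =
     (\<Sum>t< T - 1. Max ((\<lambda>k. \<bar>mean (D t k) - mean (D (Suc t) k)\<bar>) ` {..<K}))"

definition admissible :: "nat \<Rightarrow> nat \<Rightarrow> real \<Rightarrow> (nat \<Rightarrow> nat \<Rightarrow> real pmf) \<Rightarrow> bool" where
  "admissible K T V D \<longleftrightarrow> (\<forall>t k. set_pmf (D t k) \<subseteq> {0..1}) \<and> variation K T D \<le> V"

definition worst_regret :: "nat \<Rightarrow> nat \<Rightarrow> nat \<Rightarrow> real \<Rightarrow> policy \<Rightarrow> real" where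
  "worst_regret K T W V \<pi> = Sup {window_regret K T W \<pi> D | D. admissible K T V D}"

end

theory Submission
  imports Defs
begin

definition bern :: "real \<Rightarrow> real pmf" where
  "bern p = map_pmf (\<lambda>b. if b then 1 else 0) (bernoulli_pmf p)"

lemma inj_b2r: "inj (\<lambda>b::bool. if b then (1::real) else 0)"
  by (auto simp: inj_def split: if_splits)

lemma set_bern: "set_pmf (bern p) \<subseteq> {0,1}"
  by (auto simp: bern_def)

lemma pmf_bern1: "0 \<le> p \<Longrightarrow> p \<le> 1 \<Longrightarrow> pmf (bern p) 1 = p"
  using pmf_map_inj'[OF inj_b2r, of "bernoulli_pmf p" True] by (simp add: bern_def)

lemma pmf_bern0: "0 \<le> p \<Longrightarrow> p \<le> 1 \<Longrightarrow> pmf (bern p) 0 = 1 - p"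
  using pmf_map_inj'[OF inj_b2r, of "bernoulli_pmf p" False] by (simp add: bern_def)

lemma exp_bern: "0 \<le> p \<Longrightarrow> p \<le> 1 \<Longrightarrow>
   measure_pmf.expectation (bern p) f = (1 - p) * f 0 + p * f 1"
  apply (subst integral_measure_pmf[of "{0,1}"])
  using set_bern[of p] by (auto simp: pmf_bern0 pmf_bern1)

lemma mean_bern: "0 \<le> p \<Longrightarrow> p \<le> 1 \<Longrightarrow> mean (bern p) = p"
  by (simp add: mean_def exp_bern)

lemma sum01: "(\<Sum>y\<in>{0,1::real}. g y) = g 0 + g 1" by simp

definition Hset :: "nat \<Rightarrow> nat \<Rightarrow> history set" where
  "Hset K n = {h. set h \<subseteq> {..<K} \<times> {0,1} \<and> length h = n}"

lemma finite_Hset: "finite (Hset K n)"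
  unfolding Hset_def by (rule finite_lists_length_eq) auto

lemma traj_support:
  assumes "\<And>h. set_pmf (\<sigma> h) \<subseteq> {..<K}" "\<And>t a. set_pmf (D t a) \<subseteq> {0,1}"
  shows "set_pmf (traj \<sigma> D n) \<subseteq> Hset K n"
proof (induction n)
  case 0 then show ?case by (simp add: Hset_def)
next
  case (Suc n)
  show ?case
  proof
    fix h assume "h \<in> set_pmf (traj \<sigma> D (Suc n))"
    then obtain h0 a y where h0: "h0 \<in> set_pmf (traj \<sigma> D n)" and a: "a \<in> set_pmf (\<sigma> h0)"
      and y: "y \<in> set_pmf (D n a)" and h: "h = h0 @ [(a,y)]" by (simp add: set_bind_pmf) blast
    have "y \<in> {0,1}" using y assms(2) by blast
    moreover have "a < K" using a assms(1) by blast
    moreover have "h0 \<in> Hset K n" using Suc h0 by blast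
    ultimately show "h \<in> Hset K (Suc n)" using h unfolding Hset_def by simp
  qed
qed

lemma finite_traj:
  assumes "\<And>h. set_pmf (\<sigma> h) \<subseteq> {..<K}" "\<And>t a. set_pmf (D t a) \<subseteq> {0,1}"
  shows "finite (set_pmf (traj \<sigma> D n))"
  by (rule finite_subset[OF traj_support[OF assms] finite_Hset])

lemma exp_bind_fin:
  fixes h :: "'b \<Rightarrow> real"
  assumes "finite A" "\<And>x. x \<in> A \<Longrightarrow> finite (set_pmf (f x))" "set_pmf p \<subseteq> A"
  shows "measure_pmf.expectation (p \<bind> f) h = measure_pmf.expectation p (\<lambda>x. measure_pmf.expectation (f x) h)"
proof -
  have "measure_pmf.expectation p (\<lambda>x. measure_pmf.expectation (f x) h) =
     (\<Sum>a\<in>A. pmf p a *\<^sub>R measure_pmf.expectation (f a) h)"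
    by (rule integral_measure_pmf[OF assms(1)]) (use assms(3) in auto)
  then show ?thesis by (simp add: pmf_expectation_bind[OF assms])
qed

lemma exp_traj_Suc:
  assumes "\<And>h. set_pmf (\<sigma> h) \<subseteq> {..<K}" "\<And>t a. set_pmf (D t a) \<subseteq> {0,1}"
  shows "measure_pmf.expectation (traj \<sigma> D (Suc n)) f =
    measure_pmf.expectation (traj \<sigma> D n) (\<lambda>h. \<Sum>a<K. pmf (\<sigma> h) a *
        (pmf (D n a) 0 * f (h @ [(a,0)]) + pmf (D n a) 1 * f (h @ [(a,1)])))"
proof -
  have inner: "measure_pmf.expectation (\<sigma> h \<bind> (\<lambda>a. D n a \<bind> (\<lambda>y. return_pmf (h @ [(a, y)])))) f
     = (\<Sum>a<K. pmf (\<sigma> h) a *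
        (pmf (D n a) 0 * f (h @ [(a,0)]) + pmf (D n a) 1 * f (h @ [(a,1)])))" for h
  proof -
    have fin: "finite (set_pmf (D n a \<bind> (\<lambda>y. return_pmf (h @ [(a, y)]))))" for a
      using assms(2)[of n a] by (auto intro: finite_subset[of _ "(\<lambda>y. h @ [(a, y)]) ` {0,1}"])
    have "measure_pmf.expectation (\<sigma> h \<bind> (\<lambda>a. D n a \<bind> (\<lambda>y. return_pmf (h @ [(a, y)])))) f
      = (\<Sum>a<K. pmf (\<sigma> h) a * measure_pmf.expectation (D n a \<bind> (\<lambda>y. return_pmf (h @ [(a, y)]))) f)"
      by (subst pmf_expectation_bind[of "{..<K}"]) (use fin assms(1) in auto)
    also have "\<dots> = (\<Sum>a<K. pmf (\<sigma> h) a *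
        (pmf (D n a) 0 * f (h @ [(a,0)]) + pmf (D n a) 1 * f (h @ [(a,1)])))"
      apply (intro sum.cong refl)
      apply (subst pmf_expectation_bind[of "{0,1}"])
      using assms(2) by auto
    finally show ?thesis .
  qed
  have fin2: "finite (set_pmf (\<sigma> h \<bind> (\<lambda>a. D n a \<bind> (\<lambda>y. return_pmf (h @ [(a, y)])))))" for h
  proof -
    have "set_pmf (\<sigma> h \<bind> (\<lambda>a. D n a \<bind> (\<lambda>y. return_pmf (h @ [(a, y)])))) \<subseteq> (\<lambda>(a,y). h @ [(a,y)]) ` ({..<K} \<times> {0,1})"
      using assms by fastforce
    then show ?thesis by (rule finite_subset) auto
  qed
  show ?thesis
    apply (simp only: traj.simps)
    apply (subst exp_bind_fin[of "Hset K n"])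
    apply (rule finite_Hset)
    apply (rule fin2)
    apply (rule traj_support[OF assms])
    apply (simp only: inner)
    done
qed


lemma hoeff_pmf:
  fixes P :: "'a pmf" and X :: "'a \<Rightarrow> real"
  assumes fin: "finite (set_pmf P)" and rng: "\<And>x. x \<in> set_pmf P \<Longrightarrow> 0 \<le> X x \<and> X x \<le> c" and mu: "\<mu> > 0"
  shows "measure_pmf.expectation P (\<lambda>x. exp (- \<mu> * X x)) \<le>
           exp (- \<mu> * measure_pmf.expectation P X + \<mu>\<^sup>2 * c\<^sup>2 / 8)"
proof -
  interpret ibrv: interval_bounded_random_variable "measure_pmf P" "\<lambda>x. - X x" "-c" 0
    by unfold_locales (use rng in \<open>auto simp: AE_measure_pmf_iff\<close>)
  have int: "integrable (measure_pmf P) f" for f :: "'a \<Rightarrow> real"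
    by (rule integrable_measure_pmf_finite[OF fin])
  have H: "(\<integral>\<^sup>+x. ennreal (exp (\<mu> * (- X x - measure_pmf.expectation P (\<lambda>x. - X x)))) \<partial>measure_pmf P)
     \<le> ennreal (exp (\<mu>\<^sup>2 * (0 - - c)\<^sup>2 / 8))"
    using ibrv.Hoeffdings_lemma_nn_integral[OF mu] by simp
  define m where "m = measure_pmf.expectation P X"
  have e1: "measure_pmf.expectation P (\<lambda>x. - X x) = - m" by (simp add: m_def)
  have "(\<integral>\<^sup>+x. ennreal (exp (\<mu> * (- X x - measure_pmf.expectation P (\<lambda>x. - X x)))) \<partial>measure_pmf P)
     = ennreal (measure_pmf.expectation P (\<lambda>x. exp (\<mu> * (- X x - measure_pmf.expectation P (\<lambda>x. - X x)))))"
    by (rule nn_integral_eq_integral[OF int]) auto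
  with H have H2: "measure_pmf.expectation P (\<lambda>x. exp (\<mu> * (- X x + m))) \<le> exp (\<mu>\<^sup>2 * c\<^sup>2 / 8)"
    by (simp add: e1 m_def)
  have "measure_pmf.expectation P (\<lambda>x. exp (\<mu> * (- X x + m))) =
        exp (\<mu> * m) * measure_pmf.expectation P (\<lambda>x. exp (- \<mu> * X x))"
  proof -
    have "(\<lambda>x. exp (\<mu> * (- X x + m))) = (\<lambda>x. exp (\<mu> * m) * exp (- \<mu> * X x))"
      by (rule ext) (simp add: exp_add[symmetric] algebra_simps)
    then show ?thesis by simp
  qed
  with H2 have "exp (\<mu> * m) * measure_pmf.expectation P (\<lambda>x. exp (- \<mu> * X x)) \<le> exp (\<mu>\<^sup>2 * c\<^sup>2 / 8)"
    by simp
  then have "measure_pmf.expectation P (\<lambda>x. exp (- \<mu> * X x)) \<le> exp (\<mu>\<^sup>2 * c\<^sup>2 / 8) / exp (\<mu> * m)"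
    by (simp add: field_simps mult.commute)
  also have "\<dots> = exp (- \<mu> * m + \<mu>\<^sup>2 * c\<^sup>2 / 8)"
    by (simp add: exp_diff[symmetric])
  finally show ?thesis by (simp add: m_def)
qed

definition envc :: "real \<Rightarrow> nat \<Rightarrow> nat \<Rightarrow> nat \<Rightarrow> real pmf" where
  "envc \<epsilon> k = (\<lambda>t a. bern (1/2 + (if a = k then \<epsilon> else 0)))"

definition rho :: "real \<Rightarrow> nat \<Rightarrow> nat \<times> real \<Rightarrow> real" where
  "rho \<epsilon> k p = (if fst p = k then (if snd p = 1 then 1 + 2*\<epsilon> else 1 - 2*\<epsilon>) else 1)"

definition Lam :: "real \<Rightarrow> nat \<Rightarrow> history \<Rightarrow> real" where
  "Lam \<epsilon> k h = prod_list (map (rho \<epsilon> k) h)"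

definition Nk :: "nat \<Rightarrow> history \<Rightarrow> real" where
  "Nk k h = sum_list (map (\<lambda>p. if fst p = k then 1 else 0) h)"

lemma Lam_snoc: "Lam \<epsilon> k (h @ [p]) = Lam \<epsilon> k h * rho \<epsilon> k p"
  by (simp add: Lam_def)

lemma Nk_snoc: "Nk k (h @ [p]) = Nk k h + (if fst p = k then 1 else 0)"
  by (simp add: Nk_def)

lemma Lam_pos: "0 \<le> \<epsilon> \<Longrightarrow> \<epsilon> < 1/2 \<Longrightarrow> Lam \<epsilon> k h > 0"
  by (induction h rule: rev_induct) (auto simp: Lam_snoc rho_def Lam_def)

lemma Nk_range: "0 \<le> Nk k h \<and> Nk k h \<le> length h"
  by (induction h rule: rev_induct) (auto simp: Nk_snoc Nk_def)

lemma sum_Nk: "set h \<subseteq> {..<K} \<times> UNIV \<Longrightarrow> (\<Sum>k<K. Nk k h) = length h"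
proof (induction h rule: rev_induct)
  case Nil then show ?case by (simp add: Nk_def)
next
  case (snoc p h)
  then have "fst p < K" by (cases p) auto
  then have "(\<Sum>k<K. (if fst p = k then 1 else 0::real)) = 1"
    by (simp add: sum.delta)
  with snoc show ?case by (simp add: Nk_snoc sum.distrib)
qed

lemma pmf_envc:
  assumes "0 \<le> \<epsilon>" "\<epsilon> \<le> 1/2"
  shows "pmf (envc \<epsilon> k t a) 0 = rho \<epsilon> k (a,0) / 2" "pmf (envc \<epsilon> k t a) 1 = rho \<epsilon> k (a,1) / 2"
  using assms by (auto simp: envc_def rho_def pmf_bern0 pmf_bern1)

lemma set_envc: "set_pmf (envc \<epsilon> k t a) \<subseteq> {0,1}"
  by (simp add: envc_def set_bern)

lemma traj_support_envc:
  assumes val: "\<And>h. set_pmf (\<sigma> h) \<subseteq> {..<K}"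
  shows "set_pmf (traj \<sigma> (envc \<epsilon> k) n) \<subseteq> Hset K n"
  by (rule traj_support[OF val]) (rule set_envc)

lemma change_measure:
  assumes val: "\<And>h. set_pmf (\<sigma> h) \<subseteq> {..<K}" and e: "0 \<le> \<epsilon>" "\<epsilon> \<le> 1/2"
  shows "measure_pmf.expectation (traj \<sigma> (envc \<epsilon> k) n) f =
         measure_pmf.expectation (traj \<sigma> (envc 0 k) n) (\<lambda>h. Lam \<epsilon> k h * f h)"
proof (induction n arbitrary: f)
  case 0 then show ?case by (simp add: Lam_def)
next
  case (Suc n)
  have z: "0 \<le> (0::real)" "(0::real) \<le> 1/2" by auto
  show ?case
    apply (subst exp_traj_Suc[OF val set_envc])
    apply (subst exp_traj_Suc[OF val set_envc])
    apply (subst Suc)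
    apply (rule Bochner_Integration.integral_cong[OF refl])
    apply (simp add: pmf_envc[OF e] pmf_envc[OF z] Lam_snoc sum_distrib_left)
    apply (rule sum.cong[OF refl])
    apply (simp add: rho_def algebra_simps)
    done
qed

lemma sum_pmf_K: "set_pmf p \<subseteq> {..<(K::nat)} \<Longrightarrow> (\<Sum>a<K. pmf p a) = 1"
  by (rule sum_pmf_eq_1) auto

lemma loglik:
  assumes val: "\<And>h. set_pmf (\<sigma> h) \<subseteq> {..<K}" and e: "0 \<le> \<epsilon>" "\<epsilon> < 1/2"
  defines "\<kappa> \<equiv> - (ln (1 + 2*\<epsilon>) + ln (1 - 2*\<epsilon>)) / 2"
  shows "measure_pmf.expectation (traj \<sigma> (envc 0 k) n) (\<lambda>h. ln (Lam \<epsilon> k h) + \<kappa> * Nk k h) = 0"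
proof (induction n)
  case 0 then show ?case by (simp add: Lam_def Nk_def)
next
  case (Suc n)
  have z: "0 \<le> (0::real)" "(0::real) \<le> 1/2" by auto
  have lp: "Lam \<epsilon> k h > 0" for h using Lam_pos e by auto
  have step: "(\<Sum>a<K. pmf (\<sigma> h) a *
        (pmf (envc 0 k n a) 0 * (ln (Lam \<epsilon> k (h @ [(a,0)])) + \<kappa> * Nk k (h @ [(a,0)])) +
         pmf (envc 0 k n a) 1 * (ln (Lam \<epsilon> k (h @ [(a,1)])) + \<kappa> * Nk k (h @ [(a,1)]))))
      = ln (Lam \<epsilon> k h) + \<kappa> * Nk k h" for h
  proof -
    have "(\<Sum>a<K. pmf (\<sigma> h) a *
        (pmf (envc 0 k n a) 0 * (ln (Lam \<epsilon> k (h @ [(a,0)])) + \<kappa> * Nk k (h @ [(a,0)])) +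
         pmf (envc 0 k n a) 1 * (ln (Lam \<epsilon> k (h @ [(a,1)])) + \<kappa> * Nk k (h @ [(a,1)]))))
      = (\<Sum>a<K. pmf (\<sigma> h) a * (ln (Lam \<epsilon> k h) + \<kappa> * Nk k h))"
    proof (rule sum.cong[OF refl])
      fix a
      have r0: "rho \<epsilon> k (a,0) > 0" "rho \<epsilon> k (a,1) > 0" using e by (auto simp: rho_def)
      have "ln (Lam \<epsilon> k (h @ [(a,y)])) = ln (Lam \<epsilon> k h) + ln (rho \<epsilon> k (a,y))" if "y \<in> {0,1}" for y
        using that lp[of h] r0 by (auto simp: Lam_snoc ln_mult)
      then show "pmf (\<sigma> h) a *
        (pmf (envc 0 k n a) 0 * (ln (Lam \<epsilon> k (h @ [(a,0)])) + \<kappa> * Nk k (h @ [(a,0)])) +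
         pmf (envc 0 k n a) 1 * (ln (Lam \<epsilon> k (h @ [(a,1)])) + \<kappa> * Nk k (h @ [(a,1)])))
        = pmf (\<sigma> h) a * (ln (Lam \<epsilon> k h) + \<kappa> * Nk k h)"
        by (cases "a = k"; simp add: pmf_envc[OF z] Nk_snoc rho_def \<kappa>_def algebra_simps; simp add: field_simps)
    qed
    also have "\<dots> = ln (Lam \<epsilon> k h) + \<kappa> * Nk k h"
      by (simp add: sum_distrib_right[symmetric] sum_pmf_K[OF val])
    finally show ?thesis .
  qed
  show ?case
    apply (subst exp_traj_Suc[OF val set_envc])
    apply (subst step)
    apply (rule Suc)
    done
qed

lemma ln_chord:
  fixes x :: real
  assumes "0 \<le> x" "x \<le> 1/4"
  shows "- ln (1 - x) \<le> 4 * ln (4/3) * x"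
proof -
  have "ln ((1 - 4*x) *\<^sub>R 1 + (4*x) *\<^sub>R (3/4)) \<ge> (1 - 4*x) * ln 1 + (4*x) * ln (3/4::real)"
    by (rule concave_onD[OF ln_concave]) (use assms in auto)
  moreover have "(1 - 4*x) *\<^sub>R 1 + (4*x) *\<^sub>R (3/4) = 1 - x" by simp
  moreover have "ln (3/4::real) = - ln (4/3)" by (simp add: ln_div)
  ultimately show ?thesis by (simp add: mult_ac)
qed

lemma dv:
  assumes val: "\<And>h. set_pmf (\<sigma> h) \<subseteq> {..<K}" and e: "0 \<le> \<epsilon>" "\<epsilon> < 1/2"
  defines "\<kappa> \<equiv> - (ln (1 + 2*\<epsilon>) + ln (1 - 2*\<epsilon>)) / 2"
  shows "measure_pmf.expectation (traj \<sigma> (envc \<epsilon> k) n) (\<lambda>h. exp (g h)) \<ge>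
    exp (measure_pmf.expectation (traj \<sigma> (envc 0 k) n) g
         - \<kappa> * measure_pmf.expectation (traj \<sigma> (envc 0 k) n) (Nk k))"
proof -
  let ?P = "traj \<sigma> (envc 0 k) n"
  have int: "integrable (measure_pmf ?P) f" for f :: "history \<Rightarrow> real"
    by (rule integrable_measure_pmf_finite[OF finite_traj[OF val set_envc]])
  have lp: "Lam \<epsilon> k h > 0" for h using Lam_pos e by auto
  have "measure_pmf.expectation (traj \<sigma> (envc \<epsilon> k) n) (\<lambda>h. exp (g h)) =
        measure_pmf.expectation ?P (\<lambda>h. Lam \<epsilon> k h * exp (g h))"
    by (rule change_measure[OF val]) (use e in auto)
  also have "\<dots> = measure_pmf.expectation ?P (\<lambda>h. exp (g h + ln (Lam \<epsilon> k h)))"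
    by (rule Bochner_Integration.integral_cong[OF refl]) (simp add: exp_add lp)
  finally have eq: "measure_pmf.expectation (traj \<sigma> (envc \<epsilon> k) n) (\<lambda>h. exp (g h)) =
        measure_pmf.expectation ?P (\<lambda>h. exp (g h + ln (Lam \<epsilon> k h)))" .
  define m where "m = measure_pmf.expectation ?P (\<lambda>h. g h + ln (Lam \<epsilon> k h))"
  have ll: "measure_pmf.expectation ?P (\<lambda>h. ln (Lam \<epsilon> k h) + \<kappa> * Nk k h) = 0"
    unfolding \<kappa>_def by (rule loglik[OF val e])
  have "measure_pmf.expectation ?P (\<lambda>h. ln (Lam \<epsilon> k h) + \<kappa> * Nk k h) =
     measure_pmf.expectation ?P (\<lambda>h. ln (Lam \<epsilon> k h)) + \<kappa> * measure_pmf.expectation ?P (Nk k)"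
    using int by simp
  with ll have m: "m = measure_pmf.expectation ?P g - \<kappa> * measure_pmf.expectation ?P (Nk k)"
    unfolding m_def using int by simp
  have "measure_pmf.expectation ?P (\<lambda>h. exp m * (1 + (g h + ln (Lam \<epsilon> k h)) - m))
        \<le> measure_pmf.expectation ?P (\<lambda>h. exp (g h + ln (Lam \<epsilon> k h)))"
  proof (rule integral_mono[OF int int])
    fix h
    have "exp m * (1 + (g h + ln (Lam \<epsilon> k h) - m)) \<le> exp m * exp (g h + ln (Lam \<epsilon> k h) - m)"
      by (intro mult_left_mono) auto
    also have "\<dots> = exp (g h + ln (Lam \<epsilon> k h))" by (simp add: exp_diff)
    finally show "exp m * (1 + (g h + ln (Lam \<epsilon> k h)) - m) \<le> exp (g h + ln (Lam \<epsilon> k h))"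
      by (simp add: algebra_simps)
  qed
  moreover have "measure_pmf.expectation ?P (\<lambda>h. exp m * (1 + (g h + ln (Lam \<epsilon> k h)) - m)) = exp m"
    using int by (simp add: m_def algebra_simps)
  ultimately show ?thesis using eq m by simp
qed

lemma envc0: "envc 0 k = envc 0 0"
  by (simp add: envc_def fun_eq_iff)

lemma core:
  assumes val: "\<And>h. set_pmf (\<sigma> h) \<subseteq> {..<K}" and K: "K \<ge> 2" and LK: "real K \<le> real L"
    and n: "0 < n" "n \<le> L"
  defines "\<epsilon> \<equiv> sqrt (real K / real L) / 4" and "s \<equiv> sqrt (ln (4/3))"
  shows "(\<Sum>k<K. measure_pmf.expectation (traj \<sigma> (envc \<epsilon> k) n) (Nk k)) \<le> n + s * K * n / 2"
proof -
  have Lpos: "real L > 0" using K LK by simp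
  have e0: "0 \<le> \<epsilon>" unfolding \<epsilon>_def by simp
  have "real K / real L \<le> 1" using LK Lpos by simp
  then have "sqrt (real K / real L) \<le> 1" by simp
  then have e1: "\<epsilon> \<le> 1/4" unfolding \<epsilon>_def by simp
  have e2: "\<epsilon> < 1/2" using e1 by simp
  define \<kappa> where "\<kappa> = - (ln (1 + 2*\<epsilon>) + ln (1 - 2*\<epsilon>)) / 2"
  define x where "x = real K / (4 * real L)"
  have eps2: "4 * \<epsilon>\<^sup>2 = x" unfolding \<epsilon>_def x_def using Lpos by (simp add: power_divide)
  have x0: "0 \<le> x" "x \<le> 1/4" using eps2 e0 e1 unfolding x_def using Lpos LK by auto
  have "ln (1 + 2*\<epsilon>) + ln (1 - 2*\<epsilon>) = ln ((1 + 2*\<epsilon>) * (1 - 2*\<epsilon>))"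
    using e0 e2 by (simp add: ln_mult)
  also have "(1 + 2*\<epsilon>) * (1 - 2*\<epsilon>) = 1 - x" using eps2 by (simp add: algebra_simps power2_eq_square)
  finally have "\<kappa> = - ln (1 - x) / 2" unfolding \<kappa>_def by simp
  also have "\<dots> \<le> 4 * ln (4/3) * x / 2" using ln_chord[OF x0] by (simp add: mult_ac)
  finally have kb: "\<kappa> \<le> s\<^sup>2 * K / (2 * L)"
    unfolding s_def x_def by simp
  have s2: "s\<^sup>2 = ln (4/3)" unfolding s_def by simp
  have spos: "s > 0" unfolding s_def by simp
  define \<mu> where "\<mu> = 2 * s / n"
  have mupos: "\<mu> > 0" unfolding \<mu>_def using spos n by simp
  have kb2: "\<kappa> \<le> \<mu> * (s * K / 4)"
  proof -
    have "s\<^sup>2 * K / (2 * L) \<le> s\<^sup>2 * K / (2 * n)"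
      using n Lpos by (intro divide_left_mono mult_pos_pos) (auto simp: s2)
    also have "\<dots> = \<mu> * (s * K / 4)" unfolding \<mu>_def using n by (simp add: power2_eq_square field_simps)
    finally have "s\<^sup>2 * K / (2 * L) \<le> \<mu> * (s * K / 4)" .
    then show ?thesis using kb by linarith
  qed
  let ?P0 = "traj \<sigma> (envc 0 0) n"
  have fin0: "finite (set_pmf ?P0)" by (rule finite_traj[OF val set_envc])
  have int0: "integrable (measure_pmf ?P0) f" for f :: "history \<Rightarrow> real"
    by (rule integrable_measure_pmf_finite[OF fin0])
  have perk: "measure_pmf.expectation (traj \<sigma> (envc \<epsilon> k) n) (Nk k)
      \<le> measure_pmf.expectation ?P0 (Nk k) * (1 + s * K / 4) + s * n / 4" for k
  proof -
    let ?Pk = "traj \<sigma> (envc \<epsilon> k) n"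
    define m0 where "m0 = measure_pmf.expectation ?P0 (Nk k)"
    define mk where "mk = measure_pmf.expectation ?Pk (Nk k)"
    have m00: "m0 \<ge> 0" unfolding m0_def
      by (rule Bochner_Integration.integral_nonneg) (use Nk_range in auto)
    have "measure_pmf.expectation ?Pk (\<lambda>h. exp (- \<mu> * Nk k h)) \<ge>
      exp (measure_pmf.expectation ?P0 (\<lambda>h. - \<mu> * Nk k h) - \<kappa> * m0)"
      using dv[OF val e0 e2, where k=k and n=n and g="\<lambda>h. - \<mu> * Nk k h"] unfolding \<kappa>_def m0_def envc0[of k] .
    also have "measure_pmf.expectation ?P0 (\<lambda>h. - \<mu> * Nk k h) = - \<mu> * m0"
      unfolding m0_def by simp
    finally have A: "exp (- \<mu> * m0 - \<kappa> * m0) \<le> measure_pmf.expectation ?Pk (\<lambda>h. exp (- \<mu> * Nk k h))" .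
    have B: "measure_pmf.expectation ?Pk (\<lambda>h. exp (- \<mu> * Nk k h)) \<le> exp (- \<mu> * mk + \<mu>\<^sup>2 * (real n)\<^sup>2 / 8)"
      unfolding mk_def
    proof (rule hoeff_pmf[OF finite_traj[OF val set_envc] _ mupos])
      fix h assume "h \<in> set_pmf ?Pk"
      then have "length h = n" using traj_support_envc[where \<sigma>=\<sigma> and K=K, OF val] unfolding Hset_def by blast
      then show "0 \<le> Nk k h \<and> Nk k h \<le> real n" using Nk_range[of k h] by simp
    qed
    from order_trans[OF A B] have "- \<mu> * m0 - \<kappa> * m0 \<le> - \<mu> * mk + \<mu>\<^sup>2 * (real n)\<^sup>2 / 8" by simp
    moreover have "\<kappa> * m0 \<le> \<mu> * (s * K / 4) * m0" using kb2 m00 by (rule mult_right_mono)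
    moreover have "\<mu>\<^sup>2 * (real n)\<^sup>2 / 8 = \<mu> * (s * n / 4)"
      unfolding \<mu>_def using n by (simp add: power2_eq_square field_simps)
    ultimately have "\<mu> * mk \<le> \<mu> * (m0 * (1 + s * K / 4) + s * n / 4)"
      by (simp add: algebra_simps)
    then show ?thesis unfolding m0_def mk_def using mupos by simp
  qed
  have sum0: "(\<Sum>k<K. measure_pmf.expectation ?P0 (Nk k)) = n"
  proof -
    have "(\<Sum>k<K. measure_pmf.expectation ?P0 (Nk k)) = measure_pmf.expectation ?P0 (\<lambda>h. \<Sum>k<K. Nk k h)"
      by (rule Bochner_Integration.integral_sum[symmetric]) (use int0 in auto)
    also have "\<dots> = measure_pmf.expectation ?P0 (\<lambda>h. real n)"
    proof (rule integral_cong_AE)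
      show "AE h in measure_pmf ?P0. (\<Sum>k<K. Nk k h) = real n"
      proof (unfold AE_measure_pmf_iff, intro ballI)
        fix h assume "h \<in> set_pmf ?P0"
        then have "h \<in> Hset K n" using traj_support_envc[where \<sigma>=\<sigma> and K=K, OF val] by blast
        then show "(\<Sum>k<K. Nk k h) = real n" unfolding Hset_def by (subst sum_Nk) auto
      qed
    qed auto
    also have "\<dots> = n" by simp
    finally show ?thesis .
  qed
  have "(\<Sum>k<K. measure_pmf.expectation (traj \<sigma> (envc \<epsilon> k) n) (Nk k))
     \<le> (\<Sum>k<K. measure_pmf.expectation ?P0 (Nk k) * (1 + s * K / 4) + s * n / 4)"
    by (rule sum_mono) (rule perk)
  also have "\<dots> = n * (1 + s * K / 4) + K * (s * n / 4)"
    by (simp add: sum.distrib sum_distrib_right[symmetric] sum0)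
  also have "\<dots> = n + s * K * n / 2" by (simp add: algebra_simps)
  finally show ?thesis .
qed

lemma traj_split:
  "traj \<pi> D (s + n) = bind_pmf (traj \<pi> D s)
     (\<lambda>h. map_pmf (\<lambda>h'. h @ h') (traj (\<lambda>h'. \<pi> (h @ h')) (\<lambda>t. D (s + t)) n))"
proof (induction n)
  case 0 then show ?case by (simp add: bind_return_pmf')
next
  case (Suc n)
  have "traj \<pi> D (s + Suc n) = traj \<pi> D (Suc (s + n))" by simp
  also have "\<dots> = bind_pmf (traj \<pi> D (s + n)) (\<lambda>h. bind_pmf (\<pi> h) (\<lambda>a.
       bind_pmf (D (s + n) a) (\<lambda>y. return_pmf (h @ [(a, y)]))))" by simp
  also have "\<dots> = bind_pmf (traj \<pi> D s)
     (\<lambda>h. map_pmf (\<lambda>h'. h @ h') (traj (\<lambda>h'. \<pi> (h @ h')) (\<lambda>t. D (s + t)) (Suc n)))"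
    by (simp add: Suc map_pmf_def bind_assoc_pmf bind_return_pmf)
  finally show ?case .
qed

lemma traj_cong:
  assumes "\<And>t a. t < n \<Longrightarrow> D t a = D' t a"
  shows "traj \<pi> D n = traj \<pi> D' n"
  using assms by (induction n) auto

lemma exp_traj_split:
  fixes f :: "history \<Rightarrow> real"
  assumes val: "\<And>h. set_pmf (\<pi> h) \<subseteq> {..<K}" and rew: "\<And>t a. set_pmf (D t a) \<subseteq> {0,1}"
  shows "measure_pmf.expectation (traj \<pi> D (s + n)) f =
    measure_pmf.expectation (traj \<pi> D s) (\<lambda>h.
       measure_pmf.expectation (traj (\<lambda>h'. \<pi> (h @ h')) (\<lambda>t. D (s + t)) n) (\<lambda>h'. f (h @ h')))"
proof -
  have fin: "finite (set_pmf (map_pmf (\<lambda>h'. h @ h') (traj (\<lambda>h'. \<pi> (h @ h')) (\<lambda>t. D (s + t)) n)))" for h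
  proof -
    have "finite (set_pmf (traj (\<lambda>h'. \<pi> (h @ h')) (\<lambda>t. D (s + t)) n))"
      by (rule finite_traj) (use val rew in auto)
    then show ?thesis by simp
  qed
  show ?thesis
    apply (subst traj_split)
    apply (subst exp_bind_fin[OF finite_Hset fin traj_support[OF val rew]])
    apply simp
    done
qed

definition envg :: "real \<Rightarrow> nat \<Rightarrow> (nat \<Rightarrow> nat) \<Rightarrow> nat \<Rightarrow> nat \<Rightarrow> real pmf" where
  "envg \<epsilon> L g = (\<lambda>t a. bern (1/2 + (if a = g (t div L) then \<epsilon> else 0)))"

definition eb :: "nat \<Rightarrow> nat \<Rightarrow> nat \<Rightarrow> nat" where
  "eb T L b = min T (b * L)"

definition cntb :: "nat \<Rightarrow> nat \<Rightarrow> (nat \<Rightarrow> nat) \<Rightarrow> nat \<Rightarrow> history \<Rightarrow> real" where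
  "cntb T L g b h = (\<Sum>i\<in>{eb T L b..<eb T L (Suc b)}. if fst (h ! i) = g b then 1 else 0)"

lemma set_envg: "set_pmf (envg \<epsilon> L g t a) \<subseteq> {0,1}"
  by (simp add: envg_def set_bern)

lemma traj_support_envg:
  assumes val: "\<And>h. set_pmf (\<sigma> h) \<subseteq> {..<K}"
  shows "set_pmf (traj \<sigma> (envg \<epsilon> L g) n) \<subseteq> Hset K n"
  by (rule traj_support[OF val]) (rule set_envg)

lemma Nk_nth: "Nk k h = (\<Sum>i<length h. if fst (h ! i) = k then 1 else 0)"
proof (induction h rule: rev_induct)
  case Nil then show ?case by (simp add: Nk_def)
next
  case (snoc p h)
  have "(\<Sum>i<length (h @ [p]). if fst ((h @ [p]) ! i) = k then 1 else (0::real)) =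
        (\<Sum>i<length h. if fst ((h @ [p]) ! i) = k then 1 else 0) + (if fst p = k then 1 else 0)"
    by simp
  also have "(\<Sum>i<length h. if fst ((h @ [p]) ! i) = k then 1 else (0::real)) =
        (\<Sum>i<length h. if fst (h ! i) = k then 1 else 0)"
    by (rule sum.cong) (auto simp: nth_append)
  finally show ?case using snoc by (simp add: Nk_snoc)
qed

lemma avg_exists:
  fixes f :: "nat \<Rightarrow> real" and A :: real
  assumes "(\<Sum>k<K. f k) \<le> K * A" "K > 0"
  shows "\<exists>k<K. f k \<le> A"
proof (rule ccontr)
  assume "\<not> (\<exists>k<K. f k \<le> A)"
  then have "\<And>k. k \<in> {..<K} \<Longrightarrow> A < f k" by auto
  then have "(\<Sum>k<K. A) < (\<Sum>k<K. f k)"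
    by (intro sum_strict_mono) (use assms in auto)
  with assms show False by simp
qed

lemma block_choice:
  assumes val: "\<And>h. set_pmf (\<pi> h) \<subseteq> {..<K}" and K: "K \<ge> 2" and LK: "real K \<le> real L"
  defines "\<epsilon> \<equiv> sqrt (real K / real L) / 4" and "s \<equiv> sqrt (ln (4/3))"
  shows "\<exists>k<K. measure_pmf.expectation (traj \<pi> (envg \<epsilon> L (gg(b:=k))) (eb T L (Suc b)))
               (cntb T L (gg(b:=k)) b) \<le> (1 + s) / 2 * (real (eb T L (Suc b)) - real (eb T L b))"
proof -
  define e0 where "e0 = eb T L b"
  define e1 where "e1 = eb T L (Suc b)"
  have Lpos: "L > 0" using K LK by simp
  have e01: "e0 \<le> e1" unfolding e0_def e1_def eb_def by (simp add: min.coboundedI1 min.mono)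
  define n where "n = e1 - e0"
  have spos: "s \<ge> 0" unfolding s_def by simp
  show ?thesis
  proof (cases "n = 0")
    case True
    then have "e0 = e1" using e01 unfolding n_def by simp
    then have "cntb T L g b = (\<lambda>h. 0)" for g unfolding cntb_def e0_def e1_def by (simp add: fun_eq_iff)
    then show ?thesis using K \<open>e0 = e1\<close> unfolding e0_def e1_def by (intro exI[of _ 0]) auto
  next
    case False
    then have npos: "n > 0" by simp
    have e0b: "e0 = b * L"
    proof (rule ccontr)
      assume "e0 \<noteq> b * L"
      then have "e0 = T" unfolding e0_def eb_def by (simp add: min_def split: if_splits)
      moreover have "e1 \<le> T" unfolding e1_def eb_def by simp
      ultimately show False using npos e01 unfolding n_def by simp
    qed
    have e1e: "e1 = e0 + n" using e01 unfolding n_def by simp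
    have nL: "n \<le> L"
    proof -
      have "e1 \<le> Suc b * L" unfolding e1_def eb_def by simp
      then show ?thesis using e1e e0b by simp
    qed
    let ?D0 = "envg \<epsilon> L gg"
    let ?P = "traj \<pi> ?D0 e0"
    have finP: "finite (set_pmf ?P)" by (rule finite_traj[OF val]) (rule set_envg)
    have intP: "integrable (measure_pmf ?P) f" for f :: "history \<Rightarrow> real"
      by (rule integrable_measure_pmf_finite[OF finP])
    have valh: "\<And>h'. set_pmf (\<pi> (h @ h')) \<subseteq> {..<K}" for h using val by blast
    have F: "measure_pmf.expectation (traj \<pi> (envg \<epsilon> L (gg(b:=k))) e1) (cntb T L (gg(b:=k)) b)
       = measure_pmf.expectation ?P (\<lambda>h. measure_pmf.expectation
            (traj (\<lambda>h'. \<pi> (h @ h')) (envc \<epsilon> k) n) (Nk k))" for k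
    proof -
      have "measure_pmf.expectation (traj \<pi> (envg \<epsilon> L (gg(b:=k))) e1) (cntb T L (gg(b:=k)) b)
        = measure_pmf.expectation (traj \<pi> (envg \<epsilon> L (gg(b:=k))) e0) (\<lambda>h.
           measure_pmf.expectation (traj (\<lambda>h'. \<pi> (h @ h')) (\<lambda>t. envg \<epsilon> L (gg(b:=k)) (e0 + t)) n)
             (\<lambda>h'. cntb T L (gg(b:=k)) b (h @ h')))"
        unfolding e1e by (rule exp_traj_split[OF val]) (rule set_envg)
      also have "traj \<pi> (envg \<epsilon> L (gg(b:=k))) e0 = ?P"
      proof (rule traj_cong)
        fix t a assume "t < e0"
        then have "t div L < b" using e0b Lpos by (simp add: div_less_iff_less_mult)
        then show "envg \<epsilon> L (gg(b:=k)) t a = envg \<epsilon> L gg t a" by (simp add: envg_def)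
      qed
      also have "measure_pmf.expectation ?P (\<lambda>h.
           measure_pmf.expectation (traj (\<lambda>h'. \<pi> (h @ h')) (\<lambda>t. envg \<epsilon> L (gg(b:=k)) (e0 + t)) n)
             (\<lambda>h'. cntb T L (gg(b:=k)) b (h @ h')))
         = measure_pmf.expectation ?P (\<lambda>h. measure_pmf.expectation
            (traj (\<lambda>h'. \<pi> (h @ h')) (envc \<epsilon> k) n) (Nk k))"
      proof (rule integral_cong_AE)
        show "AE h in measure_pmf ?P. measure_pmf.expectation (traj (\<lambda>h'. \<pi> (h @ h')) (\<lambda>t. envg \<epsilon> L (gg(b:=k)) (e0 + t)) n)
             (\<lambda>h'. cntb T L (gg(b:=k)) b (h @ h')) = measure_pmf.expectation
            (traj (\<lambda>h'. \<pi> (h @ h')) (envc \<epsilon> k) n) (Nk k)"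
        proof (unfold AE_measure_pmf_iff, intro ballI)
          fix h assume "h \<in> set_pmf ?P"
          then have lh: "length h = e0" using traj_support_envg[where \<sigma>=\<pi> and K=K, OF val] unfolding Hset_def by blast
          have tr: "traj (\<lambda>h'. \<pi> (h @ h')) (\<lambda>t. envg \<epsilon> L (gg(b:=k)) (e0 + t)) n =
                    traj (\<lambda>h'. \<pi> (h @ h')) (envc \<epsilon> k) n"
          proof (rule traj_cong)
            fix t a assume "t < n"
            then have "(e0 + t) div L = b" using e0b nL Lpos
              by (simp add: div_add1_eq[of "b*L" t L])
            then show "envg \<epsilon> L (gg(b:=k)) (e0 + t) a = envc \<epsilon> k t a"
              by (simp add: envg_def envc_def)
          qed
          show "measure_pmf.expectation (traj (\<lambda>h'. \<pi> (h @ h')) (\<lambda>t. envg \<epsilon> L (gg(b:=k)) (e0 + t)) n)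
             (\<lambda>h'. cntb T L (gg(b:=k)) b (h @ h')) = measure_pmf.expectation
            (traj (\<lambda>h'. \<pi> (h @ h')) (envc \<epsilon> k) n) (Nk k)"
            unfolding tr
          proof (rule integral_cong_AE)
            show "AE h' in measure_pmf (traj (\<lambda>h'. \<pi> (h @ h')) (envc \<epsilon> k) n).
               cntb T L (gg(b:=k)) b (h @ h') = Nk k h'"
            proof (unfold AE_measure_pmf_iff, intro ballI)
              fix h' assume "h' \<in> set_pmf (traj (\<lambda>h'. \<pi> (h @ h')) (envc \<epsilon> k) n)"
              then have lh': "length h' = n" using traj_support_envc[where \<sigma>="\<lambda>h'. \<pi> (h @ h')" and K=K, OF valh]
                unfolding Hset_def by blast
              have "cntb T L (gg(b:=k)) b (h @ h') =
                 (\<Sum>i\<in>{e0..<e0+n}. if fst ((h @ h') ! i) = k then 1 else 0)"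
                unfolding cntb_def e0_def[symmetric] e1_def[symmetric] e1e by simp
              also have "\<dots> = (\<Sum>i<n. if fst ((h @ h') ! (e0 + i)) = k then 1 else 0)"
                by (subst sum.atLeastLessThan_shift_0) (simp add: lessThan_atLeast0 add.commute)
              also have "\<dots> = (\<Sum>i<n. if fst (h' ! i) = k then 1 else 0)"
                using lh by (simp add: nth_append)
              also have "\<dots> = Nk k h'" using lh' by (simp add: Nk_nth)
              finally show "cntb T L (gg(b:=k)) b (h @ h') = Nk k h'" .
            qed
          qed auto
        qed
      qed auto
      finally show ?thesis .
    qed
    have "(\<Sum>k<K. measure_pmf.expectation ?P (\<lambda>h. measure_pmf.expectation
            (traj (\<lambda>h'. \<pi> (h @ h')) (envc \<epsilon> k) n) (Nk k)))
        = measure_pmf.expectation ?P (\<lambda>h. \<Sum>k<K. measure_pmf.expectation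
            (traj (\<lambda>h'. \<pi> (h @ h')) (envc \<epsilon> k) n) (Nk k))"
      by (rule Bochner_Integration.integral_sum[symmetric]) (use intP in auto)
    also have "\<dots> \<le> measure_pmf.expectation ?P (\<lambda>h. n + s * K * n / 2)"
    proof (rule integral_mono[OF intP intP])
      fix h
      show "(\<Sum>k<K. measure_pmf.expectation (traj (\<lambda>h'. \<pi> (h @ h')) (envc \<epsilon> k) n) (Nk k))
            \<le> n + s * K * n / 2"
        unfolding \<epsilon>_def s_def by (rule core[OF valh K LK npos nL])
    qed
    also have "\<dots> = n + s * K * n / 2" by simp
    also have "\<dots> \<le> K * ((1 + s) / 2 * n)"
    proof -
      have "2 * real n \<le> real K * real n" using K by (intro mult_right_mono) auto
      then have "real n \<le> K * n / 2" by simp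
      then show ?thesis using K by (simp add: algebra_simps)
    qed
    finally have "(\<Sum>k<K. measure_pmf.expectation (traj \<pi> (envg \<epsilon> L (gg(b:=k))) e1)
               (cntb T L (gg(b:=k)) b)) \<le> K * ((1 + s) / 2 * n)"
      by (simp only: F)
    then have "\<exists>k<K. measure_pmf.expectation (traj \<pi> (envg \<epsilon> L (gg(b:=k))) e1)
               (cntb T L (gg(b:=k)) b) \<le> (1 + s) / 2 * n"
      by (rule avg_exists) (use K in simp)
    then obtain k where "k < K" "measure_pmf.expectation (traj \<pi> (envg \<epsilon> L (gg(b:=k))) (eb T L (Suc b)))
               (cntb T L (gg(b:=k)) b) \<le> (1 + s) / 2 * n"
      unfolding e1_def by blast
    moreover have "real n = real (eb T L (Suc b)) - real (eb T L b)"
      unfolding n_def e0_def[symmetric] e1_def[symmetric] using e01 by simp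
    ultimately show ?thesis by auto
  qed
qed

lemma exp_prefix:
  fixes f :: "history \<Rightarrow> real"
  assumes val: "\<And>h. set_pmf (\<pi> h) \<subseteq> {..<K}" and rew: "\<And>t a. set_pmf (D t a) \<subseteq> {0,1}"
    and mT: "m \<le> T" and f: "\<And>h h'. length h = m \<Longrightarrow> f (h @ h') = f h"
  shows "measure_pmf.expectation (traj \<pi> D T) f = measure_pmf.expectation (traj \<pi> D m) f"
proof -
  have T: "T = m + (T - m)" using mT by simp
  have "measure_pmf.expectation (traj \<pi> D T) f = measure_pmf.expectation (traj \<pi> D m) (\<lambda>h.
       measure_pmf.expectation (traj (\<lambda>h'. \<pi> (h @ h')) (\<lambda>t. D (m + t)) (T - m)) (\<lambda>h'. f (h @ h')))"
    by (subst T) (rule exp_traj_split[OF val rew])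
  also have "\<dots> = measure_pmf.expectation (traj \<pi> D m) f"
  proof (rule integral_cong_AE)
    show "AE h in measure_pmf (traj \<pi> D m).
       measure_pmf.expectation (traj (\<lambda>h'. \<pi> (h @ h')) (\<lambda>t. D (m + t)) (T - m)) (\<lambda>h'. f (h @ h')) = f h"
    proof (unfold AE_measure_pmf_iff, intro ballI)
      fix h assume "h \<in> set_pmf (traj \<pi> D m)"
      then have "length h = m" using traj_support[where \<sigma>=\<pi> and K=K and D=D, OF val rew] unfolding Hset_def by blast
      then show "measure_pmf.expectation (traj (\<lambda>h'. \<pi> (h @ h')) (\<lambda>t. D (m + t)) (T - m)) (\<lambda>h'. f (h @ h')) = f h"
        by (simp add: f)
    qed
  qed auto
  finally show ?thesis .
qed

lemma eb_simps: "eb T L 0 = 0" "L > 0 \<Longrightarrow> eb T L T = T"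
  by (auto simp: eb_def min_def)

lemma eb_mono: "eb T L b \<le> eb T L (Suc b)"
  unfolding eb_def by (simp add: min.mono)

lemma eb_div: "L > 0 \<Longrightarrow> i \<in> {eb T L b..<eb T L (Suc b)} \<Longrightarrow> i div L = b"
  unfolding eb_def
  by (auto simp: min_def split: if_splits intro!: div_nat_eqI) (auto simp: mult.commute)

lemma sum_blocks:
  fixes F :: "nat \<Rightarrow> real"
  shows "(\<Sum>i<eb T L B. F i) = (\<Sum>b<B. \<Sum>i\<in>{eb T L b..<eb T L (Suc b)}. F i)"
proof (induction B)
  case 0 then show ?case by (simp add: eb_simps)
next
  case (Suc B)
  have "(\<Sum>i<eb T L (Suc B). F i) = (\<Sum>i<eb T L B. F i) + (\<Sum>i\<in>{eb T L B..<eb T L (Suc B)}. F i)"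
    using eb_mono[of T L B] by (simp add: lessThan_atLeast0 sum.atLeastLessThan_concat)
  then show ?case using Suc by simp
qed

lemma greedy:
  assumes val: "\<And>h. set_pmf (\<pi> h) \<subseteq> {..<K}" and K: "K \<ge> 2" and LK: "real K \<le> real L"
  defines "\<epsilon> \<equiv> sqrt (real K / real L) / 4" and "s \<equiv> sqrt (ln (4/3))"
  shows "\<exists>g. (\<forall>b. g b < K) \<and> measure_pmf.expectation (traj \<pi> (envg \<epsilon> L g) T)
            (\<lambda>h. \<Sum>i<T. if fst (h ! i) = g (i div L) then 1 else 0) \<le> (1 + s) / 2 * T"
proof -
  have Lpos: "L > 0" using K LK by simp
  let ?bnd = "\<lambda>b. (1 + s) / 2 * (real (eb T L (Suc b)) - real (eb T L b))"
  define ch where "ch gg b = (SOME k. k < K \<and> measure_pmf.expectation (traj \<pi> (envg \<epsilon> L (gg(b:=k))) (eb T L (Suc b)))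
               (cntb T L (gg(b:=k)) b) \<le> ?bnd b)" for gg b
  have chP: "ch gg b < K \<and> measure_pmf.expectation (traj \<pi> (envg \<epsilon> L (gg(b:=ch gg b))) (eb T L (Suc b)))
               (cntb T L (gg(b:=ch gg b)) b) \<le> ?bnd b" for gg b
    unfolding ch_def
    by (rule someI_ex) (use block_choice[where gg=gg and b=b and T=T and \<pi>=\<pi> and K=K and L=L, OF val K LK] in \<open>simp add: \<epsilon>_def s_def\<close>)
  define Gs where "Gs = rec_nat (\<lambda>_. 0) (\<lambda>b g. g(b := ch g b))"
  have Gs0: "Gs 0 = (\<lambda>_. 0)" and GsS: "Gs (Suc b) = (Gs b)(b := ch (Gs b) b)" for b
    by (simp_all add: Gs_def)
  have G1: "Gs b c < K" for b c
  proof (induction b)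
    case 0 then show ?case using K by (simp add: Gs0)
  next
    case (Suc b) then show ?case using chP[of "Gs b" b] by (simp add: GsS)
  qed
  have G2: "c < b \<Longrightarrow> Gs b c = Gs (Suc c) c" for b c
  proof (induction b)
    case 0 then show ?case by simp
  next
    case (Suc b)
    show ?case
    proof (cases "c = b")
      case True then show ?thesis by simp
    next
      case False
      then have "c < b" using Suc.prems by simp
      then show ?thesis using Suc.IH False by (simp add: GsS)
    qed
  qed
  define g where "g = Gs T"
  have agree: "g c = Gs (Suc b) c" if "b < T" "c \<le> b" for b c
  proof -
    have "g c = Gs (Suc c) c" unfolding g_def using G2[of c T] that by simp
    moreover have "Gs (Suc b) c = Gs (Suc c) c"
    proof (cases "c = b")
      case True then show ?thesis by simp
    next
      case False then show ?thesis using G2[of c "Suc b"] that by simp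
    qed
    ultimately show ?thesis by simp
  qed
  have finT: "finite (set_pmf (traj \<pi> (envg \<epsilon> L g) T))" by (rule finite_traj[OF val]) (rule set_envg)
  have intT: "integrable (measure_pmf (traj \<pi> (envg \<epsilon> L g) T)) f" for f :: "history \<Rightarrow> real"
    by (rule integrable_measure_pmf_finite[OF finT])
  have blk: "measure_pmf.expectation (traj \<pi> (envg \<epsilon> L g) T) (cntb T L g b) \<le> ?bnd b" if bT: "b < T" for b
  proof -
    have e1: "measure_pmf.expectation (traj \<pi> (envg \<epsilon> L g) T) (cntb T L g b) =
          measure_pmf.expectation (traj \<pi> (envg \<epsilon> L g) (eb T L (Suc b))) (cntb T L g b)"
    proof (rule exp_prefix[OF val])
      show "set_pmf (envg \<epsilon> L g t a) \<subseteq> {0, 1}" for t a by (rule set_envg)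
      show "eb T L (Suc b) \<le> T" by (simp add: eb_def)
      fix h h' :: history assume "length h = eb T L (Suc b)"
      then show "cntb T L g b (h @ h') = cntb T L g b h"
        unfolding cntb_def by (intro sum.cong refl) (auto simp: nth_append)
    qed
    have tr: "traj \<pi> (envg \<epsilon> L g) (eb T L (Suc b)) = traj \<pi> (envg \<epsilon> L (Gs (Suc b))) (eb T L (Suc b))"
    proof (rule traj_cong)
      fix t a assume "t < eb T L (Suc b)"
      then have "t < Suc b * L" by (simp add: eb_def)
      then have "t div L \<le> b" using Lpos by (simp add: less_Suc_eq_le[symmetric] div_less_iff_less_mult)
      then show "envg \<epsilon> L g t a = envg \<epsilon> L (Gs (Suc b)) t a" using agree[OF bT] by (simp add: envg_def)
    qed
    have cn: "cntb T L g b = cntb T L (Gs (Suc b)) b"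
      using agree[OF bT, of b] by (simp add: cntb_def fun_eq_iff)
    have fin: "measure_pmf.expectation (traj \<pi> (envg \<epsilon> L (Gs (Suc b))) (eb T L (Suc b))) (cntb T L (Gs (Suc b)) b) \<le> ?bnd b"
      using chP[of "Gs b" b] by (simp only: GsS)
    have e2: "measure_pmf.expectation (traj \<pi> (envg \<epsilon> L g) T) (cntb T L g b) =
        measure_pmf.expectation (traj \<pi> (envg \<epsilon> L (Gs (Suc b))) (eb T L (Suc b))) (cntb T L (Gs (Suc b)) b)"
      using e1 unfolding tr by (simp only: cn)
    show ?thesis using fin unfolding e2 .
  qed
  have cnt_eq: "(\<Sum>i<T. if fst (h ! i) = g (i div L) then 1 else 0) = (\<Sum>b<T. cntb T L g b h)" for h
  proof -
    have "(\<Sum>i<T. if fst (h ! i) = g (i div L) then 1 else (0::real)) =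
          (\<Sum>i<eb T L T. if fst (h ! i) = g (i div L) then 1 else 0)" using Lpos by (simp add: eb_simps)
    also have "\<dots> = (\<Sum>b<T. \<Sum>i\<in>{eb T L b..<eb T L (Suc b)}. if fst (h ! i) = g (i div L) then 1 else 0)"
      by (rule sum_blocks)
    also have "\<dots> = (\<Sum>b<T. cntb T L g b h)"
      unfolding cntb_def by (intro sum.cong refl) (simp add: eb_div[OF Lpos])
    finally show ?thesis .
  qed
  have "measure_pmf.expectation (traj \<pi> (envg \<epsilon> L g) T)
            (\<lambda>h. \<Sum>i<T. if fst (h ! i) = g (i div L) then 1 else 0)
      = measure_pmf.expectation (traj \<pi> (envg \<epsilon> L g) T) (\<lambda>h. \<Sum>b<T. cntb T L g b h)"
    by (simp only: cnt_eq)
  also have "\<dots> = (\<Sum>b<T. measure_pmf.expectation (traj \<pi> (envg \<epsilon> L g) T) (cntb T L g b))"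
    by (rule Bochner_Integration.integral_sum) (use intT in auto)
  also have "\<dots> \<le> (\<Sum>b<T. ?bnd b)" by (rule sum_mono) (rule blk, simp)
  also have "\<dots> = (1 + s) / 2 * (real (eb T L T) - real (eb T L 0))"
    by (subst sum_distrib_left[symmetric]) (subst sum_lessThan_telescope[where f="\<lambda>b. real (eb T L b)"], rule refl)
  also have "\<dots> = (1 + s) / 2 * T" using Lpos by (simp add: eb_simps)
  finally show ?thesis using G1 unfolding g_def by blast
qed

lemma mean_envg:
  assumes "0 \<le> \<epsilon>" "\<epsilon> \<le> 1/2"
  shows "mean (envg \<epsilon> L g t a) = 1/2 + (if a = g (t div L) then \<epsilon> else 0)"
  unfolding envg_def by (rule mean_bern) (use assms in auto)

lemma variation_envg:
  assumes e: "0 \<le> \<epsilon>" "\<epsilon> \<le> 1/2" and L: "L > 0" and K: "K > 0"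
  shows "variation K T (envg \<epsilon> L g) \<le> \<epsilon> * real T / real L"
proof -
  have tm: "Max ((\<lambda>k. \<bar>mean (envg \<epsilon> L g t k) - mean (envg \<epsilon> L g (Suc t) k)\<bar>) ` {..<K})
      \<le> \<epsilon> * (real (Suc t div L) - real (t div L))" for t
  proof (subst Max_le_iff, goal_cases)
    case 1 show ?case by simp
  next
    case 2 show ?case using K by auto
  next
    case 3
    have dmono: "t div L \<le> Suc t div L" by (rule div_le_mono) simp
    show ?case
    proof (intro ballI, elim imageE)
      fix x k assume x: "x = \<bar>mean (envg \<epsilon> L g t k) - mean (envg \<epsilon> L g (Suc t) k)\<bar>"
      show "x \<le> \<epsilon> * (real (Suc t div L) - real (t div L))"
      proof (cases "t div L = Suc t div L")
        case True
        then show ?thesis unfolding x by (simp add: mean_envg[OF e])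
      next
        case False
        then have "t div L + 1 \<le> Suc t div L" using dmono by linarith
        then have "real (Suc t div L) - real (t div L) \<ge> 1" by linarith
        then have "\<epsilon> \<le> \<epsilon> * (real (Suc t div L) - real (t div L))"
          using e by (metis mult.right_neutral mult_left_mono)
        moreover have "x \<le> \<epsilon>" unfolding x using e by (simp add: mean_envg[OF e])
        ultimately show ?thesis by linarith
      qed
    qed
  qed
  have "variation K T (envg \<epsilon> L g) \<le> (\<Sum>t<T - 1. \<epsilon> * (real (Suc t div L) - real (t div L)))"
    unfolding variation_def by (rule sum_mono) (rule tm)
  also have "\<dots> = \<epsilon> * real ((T - 1) div L)"
    by (simp add: sum_distrib_left[symmetric] sum_lessThan_telescope[where f="\<lambda>t. real (t div L)"])
  also have "\<dots> \<le> \<epsilon> * (real T / real L)"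
  proof (rule mult_left_mono[OF _ e(1)])
    have "(T - 1) div L * L \<le> T" by (meson diff_le_self div_times_less_eq_dividend le_trans)
    then have "real ((T - 1) div L) * real L \<le> real T" by (metis of_nat_le_iff of_nat_mult)
    then show "real ((T - 1) div L) \<le> real T / real L" using L by (simp add: field_simps)
  qed
  finally show ?thesis by simp
qed

lemma mean_bounds:
  assumes "set_pmf p \<subseteq> {0..1}"
  shows "0 \<le> mean p \<and> mean p \<le> 1"
proof
  show "0 \<le> mean p" unfolding mean_def
    by (rule integral_nonneg_AE) (use assms in \<open>auto simp: AE_measure_pmf_iff\<close>)
  have int: "integrable (measure_pmf p) (\<lambda>y. y)"
    by (rule measure_pmf.integrable_const_bound[where B=1]) (use assms in \<open>auto simp: AE_measure_pmf_iff\<close>)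
  show "mean p \<le> 1" unfolding mean_def
    by (rule measure_pmf.integral_le_const[OF int]) (use assms in \<open>auto simp: AE_measure_pmf_iff\<close>)
qed

lemma regret_upper:
  assumes "admissible K T V D" "K > 0"
  shows "window_regret K T W \<pi> D \<le> T"
proof -
  have mb: "0 \<le> mean (D t k) \<and> mean (D t k) \<le> 1" for t k
    using assms(1) mean_bounds unfolding admissible_def by blast
  have "exp_collected \<pi> D T \<ge> 0" unfolding exp_collected_def
    by (rule Bochner_Integration.integral_nonneg) (auto intro!: sum_nonneg simp: mb)
  moreover have "(\<Sum>j<T div W. Max ((\<lambda>k. \<Sum>t\<in>{j*W..<(j+1)*W}. mean (D t k)) ` {..<K})) \<le> (\<Sum>j<T div W. real W)"
  proof (rule sum_mono)
    fix j
    show "Max ((\<lambda>k. \<Sum>t\<in>{j*W..<(j+1)*W}. mean (D t k)) ` {..<K}) \<le> real W"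
    proof (subst Max_le_iff, goal_cases)
      case 3
      have "(\<Sum>t\<in>{j*W..<(j+1)*W}. mean (D t k)) \<le> (\<Sum>t\<in>{j*W..<(j+1)*W}. 1)" for k
        by (rule sum_mono) (simp add: mb)
      then show ?case by auto
    qed (use assms(2) in auto)
  qed
  moreover have "(\<Sum>j<T div W. real W) \<le> T"
  proof -
    have "T div W * W \<le> T" by simp
    then have "real (T div W) * real W \<le> real T" by (metis of_nat_le_iff of_nat_mult)
    then show ?thesis by simp
  qed
  ultimately show ?thesis unfolding window_regret_def by linarith
qed

lemma main_bound:
  assumes K: "K \<ge> 2" and val: "valid_policy K \<pi>" and LK: "real K \<le> real L"
    and W: "W \<ge> 1" "W dvd T" "W dvd L"
    and VV: "sqrt (real K / real L) / 4 * real T / real L \<le> V"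
  shows "worst_regret K T W V \<pi> \<ge> (1/8 - sqrt (ln (4/3)) / 8) * real T * sqrt (real K / real L)"
proof -
  have val': "\<And>h. set_pmf (\<pi> h) \<subseteq> {..<K}" using val unfolding valid_policy_def by blast
  define \<epsilon> where "\<epsilon> = sqrt (real K / real L) / 4"
  define s where "s = sqrt (ln (4/3::real))"
  have Lpos: "L > 0" using K LK by simp
  have e0: "0 \<le> \<epsilon>" unfolding \<epsilon>_def by simp
  have "real K / real L \<le> 1" using LK Lpos by simp
  then have "sqrt (real K / real L) \<le> 1" by simp
  then have e1: "\<epsilon> \<le> 1/4" unfolding \<epsilon>_def by simp
  have e2: "\<epsilon> \<le> 1/2" using e1 by simp
  obtain g where gK: "\<forall>b. g b < K" and
    gE: "measure_pmf.expectation (traj \<pi> (envg \<epsilon> L g) T)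
            (\<lambda>h. \<Sum>i<T. if fst (h ! i) = g (i div L) then 1 else 0) \<le> (1 + s) / 2 * T"
    using greedy[where T=T and \<pi>=\<pi> and K=K and L=L, OF val' K LK] unfolding \<epsilon>_def s_def by blast
  define D where "D = envg \<epsilon> L g"
  have adm: "admissible K T V D"
    unfolding admissible_def
  proof
    show "\<forall>t k. set_pmf (D t k) \<subseteq> {0..1}"
      using set_envg unfolding D_def by fastforce
    have "variation K T D \<le> \<epsilon> * real T / real L"
      unfolding D_def by (rule variation_envg[OF e0 e2 Lpos]) (use K in simp)
    also have "\<dots> \<le> V" using VV unfolding \<epsilon>_def by simp
    finally show "variation K T D \<le> V" .
  qed
  obtain m where Lm: "L = W * m" using W(3) by blast
  have maxb: "Max ((\<lambda>k. \<Sum>t\<in>{j*W..<(j+1)*W}. mean (D t k)) ` {..<K}) \<ge> real W * (1/2 + \<epsilon>)" for j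
  proof -
    define k0 where "k0 = g (j * W div L)"
    have "(\<Sum>t\<in>{j*W..<(j+1)*W}. mean (D t k0)) = (\<Sum>t\<in>{j*W..<(j+1)*W}. 1/2 + \<epsilon>)"
    proof (rule sum.cong[OF refl])
      fix t assume t: "t \<in> {j*W..<(j+1)*W}"
      have "t div W = j" using t W(1) by (auto intro!: div_nat_eqI simp: mult.commute)
      then have "t div L = j * W div L" using W(1) unfolding Lm
        by (simp add: div_mult2_eq)
      then show "mean (D t k0) = 1/2 + \<epsilon>" unfolding D_def k0_def by (simp add: mean_envg[OF e0 e2])
    qed
    also have "\<dots> = real W * (1/2 + \<epsilon>)" by simp
    finally have "(\<Sum>t\<in>{j*W..<(j+1)*W}. mean (D t k0)) = real W * (1/2 + \<epsilon>)" .
    moreover have "(\<Sum>t\<in>{j*W..<(j+1)*W}. mean (D t k0)) \<le> Max ((\<lambda>k. \<Sum>t\<in>{j*W..<(j+1)*W}. mean (D t k)) ` {..<K})"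
      by (rule Max_ge) (use gK in \<open>auto simp: k0_def\<close>)
    ultimately show ?thesis by simp
  qed
  have sumMax: "(\<Sum>j<T div W. Max ((\<lambda>k. \<Sum>t\<in>{j*W..<(j+1)*W}. mean (D t k)) ` {..<K})) \<ge> real T * (1/2 + \<epsilon>)"
  proof -
    have "(\<Sum>j<T div W. Max ((\<lambda>k. \<Sum>t\<in>{j*W..<(j+1)*W}. mean (D t k)) ` {..<K})) \<ge> (\<Sum>j<T div W. real W * (1/2 + \<epsilon>))"
      by (rule sum_mono) (rule maxb)
    moreover have "(\<Sum>j<T div W. real W * (1/2 + \<epsilon>)) = real T * (1/2 + \<epsilon>)"
    proof -
      have "T div W * W = T" using W(2) by simp
      then have "real (T div W) * real W = real T" by (metis of_nat_mult)
      then show ?thesis by simp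
    qed
    ultimately show ?thesis by linarith
  qed
  have finT: "finite (set_pmf (traj \<pi> D T))" unfolding D_def by (rule finite_traj[OF val']) (rule set_envg)
  have intT: "integrable (measure_pmf (traj \<pi> D T)) f" for f :: "history \<Rightarrow> real"
    by (rule integrable_measure_pmf_finite[OF finT])
  define cnt where "cnt h = (\<Sum>i<T. if fst (h ! i) = g (i div L) then 1 else (0::real))" for h :: history
  have coll: "exp_collected \<pi> D T = real T / 2 + \<epsilon> * measure_pmf.expectation (traj \<pi> D T) cnt"
  proof -
    have eq: "(\<lambda>h. \<Sum>i<T. mean (D i (fst (h ! i)))) = (\<lambda>h. real T / 2 + \<epsilon> * cnt h)"
    proof (rule ext)
      fix h
      have pt: "mean (D i a) = 1/2 + \<epsilon> * (if a = g (i div L) then 1 else 0)" for i a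
        by (simp add: D_def mean_envg[OF e0 e2])
      show "(\<Sum>i<T. mean (D i (fst (h ! i)))) = real T / 2 + \<epsilon> * cnt h"
        unfolding cnt_def by (simp only: pt sum.distrib sum_distrib_left[symmetric]) simp
    qed
    show ?thesis unfolding exp_collected_def eq using intT by simp
  qed
  have "window_regret K T W \<pi> D \<ge> real T * (1/2 + \<epsilon>) - (real T / 2 + \<epsilon> * ((1 + s) / 2 * T))"
  proof -
    have "\<epsilon> * measure_pmf.expectation (traj \<pi> D T) cnt \<le> \<epsilon> * ((1 + s) / 2 * T)"
      using gE e0 unfolding D_def cnt_def[abs_def] by (rule mult_left_mono)
    then show ?thesis unfolding window_regret_def coll using sumMax by linarith
  qed
  also have "real T * (1/2 + \<epsilon>) - (real T / 2 + \<epsilon> * ((1 + s) / 2 * T)) =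
      (1/8 - sqrt (ln (4/3)) / 8) * real T * sqrt (real K / real L)"
    unfolding \<epsilon>_def s_def by (simp add: algebra_simps)
  finally have wr: "window_regret K T W \<pi> D \<ge> (1/8 - sqrt (ln (4/3)) / 8) * real T * sqrt (real K / real L)" .
  have bdd: "bdd_above {window_regret K T W \<pi> D | D. admissible K T V D}"
    unfolding bdd_above_def using regret_upper K by fastforce
  have "window_regret K T W \<pi> D \<le> worst_regret K T W V \<pi>"
    unfolding worst_regret_def by (rule cSup_upper[OF _ bdd]) (use adm in blast)
  with wr show ?thesis by linarith
qed

lemma cube_root_id: "(x::real) > 0 \<Longrightarrow> (x powr (1/3)) ^ 3 = x"
  by (simp add: powr_power)

lemma pow23: "(y::real) > 0 \<Longrightarrow> (y powr (2/3)) ^ 3 = y ^ 2"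
  by (simp add: powr_power)

lemma VV_helper:
  fixes K T V X A :: real
  assumes K: "K > 0" and T: "T > 0" and V: "V > 0" and X: "X > 0"
    and A3: "A ^ 3 = K * (T / V) ^ 2" and AX: "A \<le> X" and A0: "A \<ge> 0"
  shows "sqrt (K / X) / 4 * T / X \<le> V"
proof -
  have "A ^ 3 \<le> X ^ 3" using AX A0 by (rule power_mono)
  then have "V^2 * A ^ 3 \<le> V^2 * X ^ 3" by (rule mult_left_mono) simp
  moreover have "V^2 * A ^ 3 = K * T^2" using A3 V by (simp add: power_divide field_simps)
  ultimately have KT: "K * T^2 \<le> V^2 * X^3" by simp
  define z where "z = sqrt (K / X) * T / X"
  have z0: "z \<ge> 0" unfolding z_def using K X T by simp
  have "z ^ 2 = K * T^2 / X^3" unfolding z_def using K X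
    by (simp add: power_divide power_mult_distrib) (simp add: power2_eq_square power3_eq_cube field_simps)
  also have "\<dots> \<le> V^2" using KT X by (simp add: divide_le_eq)
  finally have "z ^ 2 \<le> V ^ 2" .
  then have "z \<le> V" by (rule power2_le_imp_le) (use V in simp)
  moreover have "sqrt (K / X) / 4 * T / X = z / 4" unfolding z_def by simp
  ultimately show ?thesis using z0 by linarith
qed

lemma final_cmp:
  fixes K T V L A c :: real
  assumes K: "K > 0" and T: "T > 0" and V: "V > 0" and L: "L > 0"
    and A3: "A ^ 3 = K * (T / V) ^ 2" and LA: "L \<le> 2 * A" and c: "c \<ge> 0"
  shows "c / 3 * (K * V) powr (1/3) * T powr (2/3) \<le> c * T * sqrt (K / L)"
proof -
  define a where "a = (K * V) powr (1/3)"
  define b where "b = T powr (2/3)"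
  define q where "q = sqrt (K / L)"
  have a3: "a ^ 3 = K * V" unfolding a_def by (rule cube_root_id) (use K V in simp)
  have b3: "b ^ 3 = T ^ 2" unfolding b_def by (rule pow23) (use T in simp)
  have KL0: "0 \<le> K / L" using K L by (intro divide_nonneg_nonneg) auto
  then have q2: "q ^ 2 = K / L" unfolding q_def by (rule real_sqrt_pow2)
  have q0: "q \<ge> 0" unfolding q_def using KL0 by simp
  have "L ^ 3 \<le> (2 * A) ^ 3" using LA L by (intro power_mono) auto
  then have "V^2 * L^3 \<le> V^2 * (8 * A^3)" by (intro mult_left_mono) simp_all
  also have "V^2 * (8 * A^3) = 8 * K * T^2" using A3 V by (simp add: power_divide field_simps)
  also have "\<dots> \<le> 729 * T^2 * K" using K T by simp
  finally have VL: "V^2 * L^3 \<le> 729 * T^2 * K" .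
  have "(a * b) ^ 6 = (a ^ 3) ^ 2 * (b ^ 3) ^ 2" by algebra
  also have "\<dots> = (K * V) ^ 2 * T ^ 4" by (simp add: a3 b3 flip: power_mult)
  also have "\<dots> \<le> 729 * T ^ 6 * (K / L) ^ 3"
  proof -
    have "(K * V) ^ 2 * T ^ 4 * L ^ 3 = (K^2 * T^4) * (V^2 * L^3)" by algebra
    also have "\<dots> \<le> (K^2 * T^4) * (729 * T^2 * K)" by (rule mult_left_mono[OF VL]) simp
    also have "\<dots> = 729 * T ^ 6 * K ^ 3" by algebra
    finally have "(K * V) ^ 2 * T ^ 4 * L ^ 3 \<le> 729 * T ^ 6 * K ^ 3" .
    then have "(K * V) ^ 2 * T ^ 4 \<le> 729 * T ^ 6 * K ^ 3 / L ^ 3" using L by (simp add: le_divide_eq)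
    then show ?thesis by (simp add: power_divide)
  qed
  also have "\<dots> = (3 * T * q) ^ 6"
  proof -
    have "(3 * T * q) ^ 6 = 729 * T ^ 6 * (q ^ 2) ^ 3" by algebra
    then show ?thesis by (simp add: q2)
  qed
  finally have "(a * b) ^ Suc 5 \<le> (3 * T * q) ^ Suc 5" by simp
  then have ab: "a * b \<le> 3 * T * q" by (rule power_le_imp_le_base) (use T q0 in simp)
  have "c / 3 * (a * b) \<le> c / 3 * (3 * T * q)" using ab c by (intro mult_left_mono) auto
  then show ?thesis unfolding a_def b_def q_def by (simp add: mult.assoc)
qed

theorem corollary4p2:
  fixes K T W :: nat and V :: real and \<pi> :: policy
  assumes "K \<ge> 2" and "T \<ge> K" and "0 < V" and "V \<le> real T / real K"
    and "W \<ge> 1" and "W dvd T"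
    and "valid_policy K \<pi>"
  defines "c \<equiv> 1/8 - sqrt (ln (4/3)) / 8"
  shows "(real W \<le> real K powr (1/3) * (real T / V) powr (2/3) \<longrightarrow>
            worst_regret K T W V \<pi> \<ge> c / 3 * (real K * V) powr (1/3) * real T powr (2/3))
       \<and> (real W \<ge> real K powr (1/3) * (real T / V) powr (2/3) \<longrightarrow>
            worst_regret K T W V \<pi> \<ge> c * real T * sqrt (real K / real W))"
proof -
  note K = assms(1) and TK = assms(2) and Vp = assms(3) and VT = assms(4)
    and W1 = assms(5) and WT = assms(6) and val = assms(7)
  have Kr: "real K \<ge> 2" using K by simp
  have Tr: "real T > 0" using K TK by simp
  define A where "A = real K powr (1/3) * (real T / V) powr (2/3)"
  have TV: "real T / V \<ge> real K"
    using VT Vp Kr by (simp add: le_divide_eq field_simps)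
  have A3: "A ^ 3 = real K * (real T / V) ^ 2"
    unfolding A_def power_mult_distrib
    by (subst cube_root_id, use Kr in simp, subst pow23, use Tr Vp in simp_all)
  have Apos: "A > 0" unfolding A_def using Kr Tr Vp by simp
  have AK: "A \<ge> real K"
  proof -
    have "real K ^ 2 \<le> (real T / V) ^ 2" using TV Kr by (intro power_mono) auto
    then have "real K * real K ^ 2 \<le> real K * (real T / V) ^ 2" using Kr by (intro mult_left_mono) auto
    then have "real K ^ Suc 2 \<le> A ^ Suc 2" using A3 by (simp add: power2_eq_square power3_eq_cube)
    then show ?thesis by (rule power_le_imp_le_base) (use Apos in simp)
  qed
  have s1: "sqrt (ln (4/3::real)) \<le> 1"
  proof -
    have "ln (4/3::real) \<le> 4/3 - 1" by (rule ln_le_minus_one) simp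
    then show ?thesis by simp
  qed
  have c0: "c \<ge> 0" unfolding c_def using s1 by simp
  show ?thesis
  proof (intro conjI impI)
    assume WA: "real W \<le> real K powr (1/3) * (real T / V) powr (2/3)"
    then have WA: "real W \<le> A" unfolding A_def .
    define m where "m = nat \<lceil>A / real W\<rceil>"
    define L where "L = W * m"
    have Wr: "real W > 0" using W1 by simp
    have mr: "real m = of_int \<lceil>A / real W\<rceil>" unfolding m_def using Apos Wr
      by (simp add: divide_nonneg_nonneg)
    have Lr: "real L = real W * of_int \<lceil>A / real W\<rceil>" unfolding L_def by (simp add: mr)
    have LA1: "real L \<ge> A"
    proof -
      have "A / real W \<le> of_int \<lceil>A / real W\<rceil>" by (rule le_of_int_ceiling)
      then have "real W * (A / real W) \<le> real W * of_int \<lceil>A / real W\<rceil>" using Wr by (intro mult_left_mono) auto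
      then show ?thesis using Wr Lr by simp
    qed
    have LA2: "real L \<le> 2 * A"
    proof -
      have "of_int \<lceil>A / real W\<rceil> < A / real W + 1" using ceiling_correct[of "A / real W"] by linarith
      then have "real W * of_int \<lceil>A / real W\<rceil> \<le> real W * (A / real W + 1)" using Wr by (intro mult_left_mono) auto
      then show ?thesis using Wr Lr WA by (simp add: algebra_simps)
    qed
    have Lpos: "real L > 0" using LA1 Apos by simp
    have LK: "real K \<le> real L" using AK LA1 by simp
    have VV: "sqrt (real K / real L) / 4 * real T / real L \<le> V"
      by (rule VV_helper[OF _ Tr Vp Lpos A3 LA1]) (use Kr Apos in simp_all)
    have "worst_regret K T W V \<pi> \<ge> (1/8 - sqrt (ln (4/3)) / 8) * real T * sqrt (real K / real L)"
      by (rule main_bound[OF K val LK W1 WT]) (use VV in \<open>simp_all add: L_def\<close>)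
    moreover have "c / 3 * (real K * V) powr (1/3) * real T powr (2/3) \<le> c * real T * sqrt (real K / real L)"
      by (rule final_cmp[OF _ Tr Vp Lpos A3 LA2 c0]) (use Kr in simp)
    ultimately show "worst_regret K T W V \<pi> \<ge> c / 3 * (real K * V) powr (1/3) * real T powr (2/3)"
      unfolding c_def by linarith
  next
    assume WA: "real W \<ge> real K powr (1/3) * (real T / V) powr (2/3)"
    then have WA: "A \<le> real W" unfolding A_def .
    have Wpos: "real W > 0" using WA Apos by simp
    have LK: "real K \<le> real W" using AK WA by simp
    have VV: "sqrt (real K / real W) / 4 * real T / real W \<le> V"
      by (rule VV_helper[OF _ Tr Vp Wpos A3 WA]) (use Kr Apos in simp_all)
    show "worst_regret K T W V \<pi> \<ge> c * real T * sqrt (real K / real W)"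
      unfolding c_def by (rule main_bound[OF K val LK W1 WT dvd_refl VV])
  qed
qed

end
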